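(* Let $\mathcal{T}$ be the tree constructed below in a metric space of doubling dimension at most $\kappa$. Every node $\langle j,r\rangle$ of $\mathcal{T}$ has at most $2^{4\kappa}$ children.
   Context: $(V,d)$ is a metric space of diameter $W$ whose doubling dimension is at most $\kappa$: every ball $B(x,\rho)=\{y\in V:d(x,y)\le\rho\}$ can be covered by $2^\kappa$ balls of radius $\rho/2$. $F\subseteq V$ is a finite set of facilities with opening costs $f_j>0$, $f_{\min}=\min_j f_j$. Let $\rho_{\min}=\lfloor\log_5 f_{\min}\rfloor$, $\rho_{\max}=\lceil\log_5 W\rceil$. For each integer $r\in[\rho_{\min},\rho_{\max}]$, let $J'_r=\{j\in F:f_j\le 5^r\}$ and let $J_r$ be a maximal subset of $J'_r$ such that any two facilities of $J_r$ are at distance greater than $5^{r+1}$. $\Pi=\{\langle j,r\rangle:\rho_{\min}\le r\le\rho_{\max},\ j\in J_r\}$. The tree $\mathcal{T}$ on $\Pi$ has as root the unique pair with $r=\rho_{\max}$, and for $r<\rho_{\max}$ and $j\in J_r$, $\mathrm{parent}(j,r)=\langle j',r+1\rangle$ where $j'$ is a facility of $J_{r+1}$ closest to $j$ (ties broken arbitrarily). *)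

theory Defs
  imports "HOL-Analysis.Analysis"
begin

definition dball :: "'a set \<Rightarrow> ('a \<Rightarrow> 'a \<Rightarrow> real) \<Rightarrow> 'a \<Rightarrow> real \<Rightarrow> 'a set" where
  "dball V d x \<rho> = {y \<in> V. d x y \<le> \<rho>}"

definition doubling_dim_le :: "'a set \<Rightarrow> ('a \<Rightarrow> 'a \<Rightarrow> real) \<Rightarrow> real \<Rightarrow> bool" where
  "doubling_dim_le V d \<kappa> \<longleftrightarrow>
     (\<forall>x\<in>V. \<forall>\<rho>>0. \<exists>C. C \<subseteq> V \<and> finite C \<and> real (card C) \<le> 2 powr \<kappa> \<and>
        dball V d x \<rho> \<subseteq> (\<Union>c\<in>C. dball V d c (\<rho> / 2)))"

definition diam :: "'a set \<Rightarrow> ('a \<Rightarrow> 'a \<Rightarrow> real) \<Rightarrow> real" where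
  "diam V d = Sup {d x y | x y. x \<in> V \<and> y \<in> V}"

definition f_min :: "'a set \<Rightarrow> ('a \<Rightarrow> real) \<Rightarrow> real" where
  "f_min F f = Min (f ` F)"

definition rho_min :: "'a set \<Rightarrow> ('a \<Rightarrow> real) \<Rightarrow> int" where
  "rho_min F f = \<lfloor>log 5 (f_min F f)\<rfloor>"

definition rho_max :: "'a set \<Rightarrow> ('a \<Rightarrow> 'a \<Rightarrow> real) \<Rightarrow> int" where
  "rho_max V d = \<lceil>log 5 (diam V d)\<rceil>"

definition Jprime :: "'a set \<Rightarrow> ('a \<Rightarrow> real) \<Rightarrow> int \<Rightarrow> 'a set" where
  "Jprime F f r = {j \<in> F. f j \<le> 5 powr (real_of_int r)}"

definition maximal_sep :: "('a \<Rightarrow> 'a \<Rightarrow> real) \<Rightarrow> 'a set \<Rightarrow> real \<Rightarrow> 'a set \<Rightarrow> bool" where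
  "maximal_sep d A \<delta> S \<longleftrightarrow>
     S \<subseteq> A \<and> (\<forall>x\<in>S. \<forall>y\<in>S. x \<noteq> y \<longrightarrow> d x y > \<delta>) \<and>
     (\<forall>S'. S \<subseteq> S' \<and> S' \<subseteq> A \<and> (\<forall>x\<in>S'. \<forall>y\<in>S'. x \<noteq> y \<longrightarrow> d x y > \<delta>) \<longrightarrow> S' = S)"

definition Nodes :: "('a \<Rightarrow> 'a \<Rightarrow> real) \<Rightarrow> 'a set \<Rightarrow> ('a \<Rightarrow> real) \<Rightarrow> 'a set \<Rightarrow> (int \<Rightarrow> 'a set) \<Rightarrow> ('a \<times> int) set" where
  "Nodes d V f F J = {(j, r). rho_min F f \<le> r \<and> r \<le> rho_max V d \<and> j \<in> J r}"

definition valid_parent ::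
  "('a \<Rightarrow> 'a \<Rightarrow> real) \<Rightarrow> 'a set \<Rightarrow> ('a \<Rightarrow> real) \<Rightarrow> 'a set \<Rightarrow> (int \<Rightarrow> 'a set) \<Rightarrow> ('a \<times> int \<Rightarrow> 'a \<times> int) \<Rightarrow> bool" where
  "valid_parent d V f F J par \<longleftrightarrow>
     (\<forall>(j, r) \<in> Nodes d V f F J. r < rho_max V d \<longrightarrow>
        snd (par (j, r)) = r + 1 \<and> fst (par (j, r)) \<in> J (r + 1) \<and>
        (\<forall>j'' \<in> J (r + 1). d j (fst (par (j, r))) \<le> d j j''))"

definition children ::
  "('a \<Rightarrow> 'a \<Rightarrow> real) \<Rightarrow> 'a set \<Rightarrow> ('a \<Rightarrow> real) \<Rightarrow> 'a set \<Rightarrow> (int \<Rightarrow> 'a set) \<Rightarrow> ('a \<times> int \<Rightarrow> 'a \<times> int) \<Rightarrow> 'a \<times> int \<Rightarrow> ('a \<times> int) set" where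
  "children d V f F J par u = {v \<in> Nodes d V f F J. snd v < rho_max V d \<and> par v = u}"

end

theory Submission
  imports Defs
begin

lemma cover_iter:
  assumes dbl: "doubling_dim_le V d \<kappa>" and x: "x \<in> V" and rho: "\<rho> > 0"
  shows "\<exists>C. C \<subseteq> V \<and> finite C \<and> real (card C) \<le> (2 powr \<kappa>) ^ n \<and>
           dball V d x \<rho> \<subseteq> (\<Union>c\<in>C. dball V d c (\<rho> / 2 ^ n))"
proof (induction n)
  case 0
  show ?case
    by (rule exI[of _ "{x}"]) (use x in auto)
next
  case (Suc n)
  then obtain C where C: "C \<subseteq> V" "finite C" "real (card C) \<le> (2 powr \<kappa>) ^ n"
    "dball V d x \<rho> \<subseteq> (\<Union>c\<in>C. dball V d c (\<rho> / 2 ^ n))" by blast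
  define P where "P c D \<longleftrightarrow> D \<subseteq> V \<and> finite D \<and> real (card D) \<le> 2 powr \<kappa> \<and>
        dball V d c (\<rho> / 2 ^ n) \<subseteq> (\<Union>e\<in>D. dball V d e (\<rho> / 2 ^ n / 2))" for c D
  have ex: "\<exists>D. P c D" if "c \<in> C" for c
  proof -
    have cV: "c \<in> V" using C(1) that by blast
    have rp: "\<rho> / 2 ^ n > 0" using rho by simp
    obtain D where "D \<subseteq> V \<and> finite D \<and> real (card D) \<le> 2 powr \<kappa> \<and>
        dball V d c (\<rho> / 2 ^ n) \<subseteq> (\<Union>e\<in>D. dball V d e (\<rho> / 2 ^ n / 2))"
      using dbl[unfolded doubling_dim_le_def, rule_format, OF cV rp] by blast
    thus ?thesis unfolding P_def by blast
  qed
  define G where "G c = (SOME D. P c D)" for c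
  have G: "P c (G c)" if "c \<in> C" for c
    using someI_ex[OF ex[OF that]] unfolding G_def .
  have G1: "G c \<subseteq> V" "finite (G c)" "real (card (G c)) \<le> 2 powr \<kappa>"
    "dball V d c (\<rho> / 2 ^ n) \<subseteq> (\<Union>e\<in>G c. dball V d e (\<rho> / 2 ^ n / 2))"
    if "c \<in> C" for c using G[OF that] unfolding P_def by simp_all
  define C' where "C' = (\<Union>c\<in>C. G c)"
  have "C' \<subseteq> V" unfolding C'_def using G1(1) by blast
  moreover have "finite C'" unfolding C'_def using G1(2) C(2) by blast
  moreover have "real (card C') \<le> (2 powr \<kappa>) ^ Suc n"
  proof -
    have "card C' \<le> (\<Sum>c\<in>C. card (G c))" unfolding C'_def by (rule card_UN_le[OF C(2)])
    hence "real (card C') \<le> (\<Sum>c\<in>C. real (card (G c)))"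
      by (metis of_nat_le_iff of_nat_sum)
    also have "\<dots> \<le> (\<Sum>c\<in>C. 2 powr \<kappa>)"
      by (rule sum_mono) (rule G1(3))
    also have "\<dots> = real (card C) * 2 powr \<kappa>" by simp
    also have "\<dots> \<le> (2 powr \<kappa>) ^ n * 2 powr \<kappa>"
      by (rule mult_right_mono[OF C(3)]) simp
    finally show ?thesis by (simp add: mult.commute)
  qed
  moreover have "dball V d x \<rho> \<subseteq> (\<Union>c\<in>C'. dball V d c (\<rho> / 2 ^ Suc n))"
  proof
    fix y assume "y \<in> dball V d x \<rho>"
    with C(4) obtain c where c: "c \<in> C" "y \<in> dball V d c (\<rho> / 2 ^ n)" by blast
    with G1(4)[OF c(1)] obtain e where e: "e \<in> G c" "y \<in> dball V d e (\<rho> / 2 ^ n / 2)"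
      by blast
    have "\<rho> / 2 ^ n / 2 = \<rho> / 2 ^ Suc n" by simp
    hence "y \<in> dball V d e (\<rho> / 2 ^ Suc n)" using e(2) by metis
    moreover have "e \<in> C'" using c(1) e(1) unfolding C'_def by blast
    ultimately show "y \<in> (\<Union>c\<in>C'. dball V d c (\<rho> / 2 ^ Suc n))" by blast
  qed
  ultimately show ?case by blast
qed

lemma ms_sub: "maximal_sep d A \<delta> S \<Longrightarrow> S \<subseteq> A"
  unfolding maximal_sep_def by simp

lemma ms_sep: "maximal_sep d A \<delta> S \<Longrightarrow> x \<in> S \<Longrightarrow> y \<in> S \<Longrightarrow> x \<noteq> y \<Longrightarrow> d x y > \<delta>"
  unfolding maximal_sep_def by (elim conjE) (drule bspec, assumption, drule bspec, assumption, simp)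

lemma ms_max: "maximal_sep d A \<delta> S \<Longrightarrow> S \<subseteq> S' \<Longrightarrow> S' \<subseteq> A \<Longrightarrow>
   (\<forall>x\<in>S'. \<forall>y\<in>S'. x \<noteq> y \<longrightarrow> d x y > \<delta>) \<Longrightarrow> S' = S"
  unfolding maximal_sep_def by (elim conjE) (drule spec[of _ S'], simp)

lemma Jp_sub: "Jprime F f r \<subseteq> F" unfolding Jprime_def by auto

theorem lemma4:
  fixes V :: "'a set" and d :: "'a \<Rightarrow> 'a \<Rightarrow> real" and \<kappa> :: real
    and F :: "'a set" and f :: "'a \<Rightarrow> real"
    and J :: "int \<Rightarrow> 'a set" and par :: "'a \<times> int \<Rightarrow> 'a \<times> int"
  assumes metric: "Metric_space V d"
    and bounded: "\<exists>B. \<forall>x\<in>V. \<forall>y\<in>V. d x y \<le> B"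
    and doubling: "doubling_dim_le V d \<kappa>"
    and F_fin: "finite F" and F_ne: "F \<noteq> {}" and F_sub: "F \<subseteq> V"
    and f_pos: "\<forall>j\<in>F. f j > 0"
    and J_max: "\<forall>r. rho_min F f \<le> r \<and> r \<le> rho_max V d \<longrightarrow>
                     maximal_sep d (Jprime F f r) (5 powr (real_of_int (r + 1))) (J r)"
    and par_ok: "valid_parent d V f F J par"
    and node: "u \<in> Nodes d V f F J"
  shows "real (card (children d V f F J par u)) \<le> 2 powr (4 * \<kappa>)"
proof -
  interpret M: Metric_space V d by (rule metric)
  obtain j r where u: "u = (j, r)" by (cases u)
  have ur: "rho_min F f \<le> r" "r \<le> rho_max V d" "j \<in> J r"
    using node unfolding u Nodes_def by auto
  have Jr: "maximal_sep d (Jprime F f r) (5 powr (real_of_int (r + 1))) (J r)"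
    using J_max ur by auto
  have JV: "J s \<subseteq> V" if "rho_min F f \<le> s" "s \<le> rho_max V d" for s
  proof -
    have "maximal_sep d (Jprime F f s) (5 powr (real_of_int (s + 1))) (J s)"
      using J_max that by blast
    hence "J s \<subseteq> Jprime F f s" by (rule ms_sub)
    also have "\<dots> \<subseteq> F" by (rule Jp_sub)
    finally show ?thesis using F_sub by (rule subset_trans)
  qed
  have jV: "j \<in> V" using JV[OF ur(1,2)] ur(3) by (rule subsetD)
  let ?Ch = "children d V f F J par u"
  have ch: "snd v = r - 1 \<and> fst v \<in> J (r - 1) \<and> fst v \<in> V \<and> d j (fst v) \<le> 5 powr (real_of_int (r + 1))
             \<and> rho_min F f \<le> r - 1"
    if v: "v \<in> ?Ch" for v
  proof -
    obtain j' s where vs: "v = (j', s)" by (cases v)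
    have sN: "rho_min F f \<le> s" "s \<le> rho_max V d" "j' \<in> J s" "s < rho_max V d" "par (j', s) = (j, r)"
    proof -
      have h: "(j', s) \<in> Nodes d V f F J" "s < rho_max V d" "par (j', s) = (j, r)"
        using v unfolding children_def vs u by simp_all
      from h(1) have "rho_min F f \<le> s \<and> s \<le> rho_max V d \<and> j' \<in> J s"
        unfolding Nodes_def by simp
      thus "rho_min F f \<le> s" "s \<le> rho_max V d" "j' \<in> J s" "s < rho_max V d" "par (j', s) = (j, r)"
        using h by simp_all
    qed
    have P: "snd (par (j', s)) = s + 1" "fst (par (j', s)) \<in> J (s + 1)"
      "\<forall>j'' \<in> J (s + 1). d j' (fst (par (j', s))) \<le> d j' j''"
    proof -
      have nd: "(j', s) \<in> Nodes d V f F J" unfolding Nodes_def using sN(1,2,3) by simp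
      have "snd (par (j', s)) = s + 1 \<and> fst (par (j', s)) \<in> J (s + 1) \<and>
        (\<forall>j'' \<in> J (s + 1). d j' (fst (par (j', s))) \<le> d j' j'')"
        using bspec[OF par_ok[unfolded valid_parent_def] nd] sN(4) by simp
      thus "snd (par (j', s)) = s + 1" "fst (par (j', s)) \<in> J (s + 1)"
        "\<forall>j'' \<in> J (s + 1). d j' (fst (par (j', s))) \<le> d j' j''" by blast+
    qed
    have rs: "r = s + 1" using P(1) sN(5) by simp
    have clos: "\<forall>j'' \<in> J r. d j' j \<le> d j' j''" using P(3) sN(5) rs by simp
    have js: "maximal_sep d (Jprime F f s) (5 powr (real_of_int (s + 1))) (J s)"
      using J_max sN by auto
    have j'V: "j' \<in> V" using JV[OF sN(1,2)] sN(3) by (rule subsetD)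
    have j'Jp: "j' \<in> Jprime F f r"
    proof -
      have "j' \<in> Jprime F f s" using ms_sub[OF js] sN(3) by blast
      moreover have "5 powr real_of_int s \<le> 5 powr real_of_int r" using rs by simp
      ultimately show ?thesis unfolding Jprime_def by (auto intro: order_trans)
    qed
    have "\<exists>y\<in>J r. d j' y \<le> 5 powr (real_of_int (r + 1))"
    proof (cases "j' \<in> J r")
      case True thus ?thesis using j'V by (intro bexI[of _ j']) auto
    next
      case False
      let ?S = "insert j' (J r)"
      have "?S \<noteq> J r" using False by (auto simp: insert_absorb)
      have "\<not> (\<forall>x\<in>?S. \<forall>y\<in>?S. x \<noteq> y \<longrightarrow> d x y > 5 powr (real_of_int (r + 1)))"
      proof
        assume A: "\<forall>x\<in>?S. \<forall>y\<in>?S. x \<noteq> y \<longrightarrow> d x y > 5 powr (real_of_int (r + 1))"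
        have sub: "?S \<subseteq> Jprime F f r" using j'Jp ms_sub[OF Jr] by (rule insert_subsetI)
        have "?S = J r" by (rule ms_max[OF Jr subset_insertI sub A])
        thus False using False by (metis insertI1)
      qed
      then obtain x y where xy: "x \<in> ?S" "y \<in> ?S" "x \<noteq> y" "d x y \<le> 5 powr (real_of_int (r + 1))"
        by (auto simp: not_less)
      have "\<not> (x \<in> J r \<and> y \<in> J r)" using ms_sep[OF Jr, of x y] xy(3,4) by linarith
      hence "x = j' \<and> y \<in> J r \<or> y = j' \<and> x \<in> J r" using xy(1,2,3) by blast
      thus ?thesis
      proof
        assume "x = j' \<and> y \<in> J r" thus ?thesis using xy(4) by blast
      next
        assume a: "y = j' \<and> x \<in> J r"
        have "d j' x = d x y" using a M.commute[of j' x] by simp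
        thus ?thesis using a xy(4) by (intro bexI[of _ x]) auto
      qed
    qed
    then obtain y where "y \<in> J r" "d j' y \<le> 5 powr (real_of_int (r + 1))" by blast
    hence "d j' j \<le> 5 powr (real_of_int (r + 1))" using clos by force
    moreover have "d j j' = d j' j" by (rule M.commute)
    ultimately show ?thesis using vs rs sN(1,3) j'V by simp
  qed
  define \<rho> :: real where "\<rho> = 5 powr (real_of_int (r + 1))"
  have rho: "\<rho> > 0" unfolding \<rho>_def by simp
  obtain C where C: "C \<subseteq> V" "finite C" "real (card C) \<le> (2 powr \<kappa>) ^ 4"
    "dball V d j \<rho> \<subseteq> (\<Union>c\<in>C. dball V d c (\<rho> / 2 ^ 4))"
    using cover_iter[OF doubling jV rho, of 4] by blast
  have inC: "\<exists>c\<in>C. fst v \<in> dball V d c (\<rho> / 16)" if "v \<in> ?Ch" for v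
  proof -
    have "fst v \<in> dball V d j \<rho>" using ch[OF that] unfolding dball_def \<rho>_def by auto
    thus ?thesis using C(4) by auto
  qed
  define g where "g (v::'a \<times> int) = (SOME c. c \<in> C \<and> fst v \<in> dball V d c (\<rho> / 16))" for v
  have g: "g v \<in> C \<and> fst v \<in> dball V d (g v) (\<rho> / 16)" if "v \<in> ?Ch" for v
    using someI_ex[of "\<lambda>c. c \<in> C \<and> fst v \<in> dball V d c (\<rho> / 16)"] inC[OF that]
    unfolding g_def by blast
  have inj: "inj_on g ?Ch"
  proof (rule inj_onI)
    fix v w assume v: "v \<in> ?Ch" and w: "w \<in> ?Ch" and e: "g v = g w"
    have cV: "g v \<in> V" using g[OF v] C(1) by blast
    have "d (fst v) (fst w) \<le> d (fst v) (g v) + d (g v) (fst w)"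
      using M.triangle cV ch[OF v] ch[OF w] by blast
    also have "\<dots> \<le> \<rho> / 8"
      using g[OF v] g[OF w] e M.commute unfolding dball_def by auto
    also have "\<dots> < 5 powr (real_of_int (r - 1 + 1))"
      unfolding \<rho>_def by (simp add: powr_add)
    finally have lt: "d (fst v) (fst w) < 5 powr (real_of_int (r - 1 + 1))" .
    have sep: "maximal_sep d (Jprime F f (r - 1)) (5 powr (real_of_int (r - 1 + 1))) (J (r - 1))"
    proof -
      have le1: "rho_min F f \<le> r - 1" using ch[OF v] by blast
      have le2: "r - 1 \<le> rho_max V d" using ur(2) by simp
      show ?thesis by (rule J_max[rule_format, OF conjI[OF le1 le2]])
    qed
    have "fst v = fst w"
      using ms_sep[OF sep] ch[OF v] ch[OF w] lt by force
    thus "v = w" using ch[OF v] ch[OF w] by (simp add: prod_eq_iff)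
  qed
  have "card ?Ch \<le> card C"
    by (rule card_inj_on_le[OF inj _ C(2)]) (use g in blast)
  hence "real (card ?Ch) \<le> (2 powr \<kappa>) ^ 4" using C(3) by linarith
  also have "\<dots> = 2 powr (4 * \<kappa>)" by (simp add: powr_power)
  finally show ?thesis .
qed

end
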